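(* Let $X=\{0,1\}$ and $c\geq1$. Let $\widetilde K_{1,01}(c)$ be the set of all $w\in X^c$ such that the sequence $(1,01,w)$ is not a code, and let $J_{1,01}(c)$ be the set of all words in $X^c$ that do not contain two consecutive $0$'s (i.e. do not contain $00$ as a factor). Then $\widetilde K_{1,01}(c)=J_{1,01}(c)$, and $|\widetilde K_{1,01}(c)|=F_{c+2}$, where $F_k$ is the $k$-th Fibonacci number ($F_0=0$, $F_1=1$, $F_k=F_{k-1}+F_{k-2}$).
   Context: A code over $X$ is a finite sequence $C=(v_1,\ldots,v_m)$ of words over $X$ such that every $w\in X^*$ has at most one factorization into code-words: if $w=v_{i_1}\cdots v_{i_l}=v_{j_1}\cdots v_{j_{l'}}$ with $l,l'\geq1$, then $l=l'$ and $i_t=j_t$ for all $t$. *)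

theory Defs
  imports Main "HOL-Number_Theory.Fib"
begin

text \<open>Words over X = {0,1} are represented as bool lists: False = 0, True = 1.
  A code is a finite sequence (list) of words C = [v_1,...,v_m] such that every word
  has at most one factorization into code words (index sequences of length >= 1).\<close>

definition is_code :: "'a list list \<Rightarrow> bool" where
  "is_code C \<longleftrightarrow>
     (\<forall>is js. is \<noteq> [] \<longrightarrow> js \<noteq> [] \<longrightarrow>
        set is \<subseteq> {..<length C} \<longrightarrow> set js \<subseteq> {..<length C} \<longrightarrow>
        concat (map (\<lambda>i. C ! i) is) = concat (map (\<lambda>i. C ! i) js) \<longrightarrow> is = js)"

definition zero :: bool where "zero = False"
definition one :: bool where "one = True"

definition Ktilde :: "nat \<Rightarrow> bool list set" where
  "Ktilde c = {w. length w = c \<and> \<not> is_code [[one], [zero, one], w]}"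

definition J :: "nat \<Rightarrow> bool list set" where
  "J c = {w. length w = c \<and> \<not> (\<exists>u v. w = u @ [zero, zero] @ v)}"

end

theory Submission
  imports Defs
begin

fun nz :: "bool list \<Rightarrow> bool" where
  "nz (False # False # r) = False"
| "nz (x # r) = nz r"
| "nz [] = True"

lemma nz_tl: "nz (x # r) \<Longrightarrow> nz r"
  by (cases x; cases r; auto; case_tac a; auto)

lemma nz_not_tl: "\<not> nz (x # r) \<Longrightarrow> \<not> nz r \<or> (x = False \<and> hd r = False \<and> r \<noteq> [])"
  by (cases x; cases r) auto

lemma nz_no: "nz u \<Longrightarrow> u \<noteq> a @ [False, False] @ b"
proof (induction a arbitrary: u)
  case Nil then show ?case by auto
next
  case (Cons x a) then show ?case using nz_tl by fastforce
qed

lemma nz_ex: "\<not> nz u \<Longrightarrow> \<exists>a b. u = a @ [False, False] @ b"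
proof (induction u)
  case Nil then show ?case by simp
next
  case (Cons x r)
  show ?case
  proof (cases "nz r")
    case True
    then have "x = False \<and> hd r = False \<and> r \<noteq> []" using nz_not_tl Cons.prems by blast
    then show ?thesis by (cases r) auto
  next
    case False
    then obtain a b where "r = a @ [False, False] @ b" using Cons.IH by blast
    then show ?thesis by (metis append_Cons)
  qed
qed

lemma nz_iff: "nz u = (\<forall>a b. u \<noteq> a @ [False, False] @ b)"
  using nz_no nz_ex by blast

lemma nz_prefix: "nz (p @ q) \<Longrightarrow> nz p"
  by (metis append.assoc nz_iff)

lemma nz_True: "nz (True # r) = nz r" by simp

lemma nz_app: "nz p \<Longrightarrow> nz q \<Longrightarrow> (p = [] \<or> last p = True) \<Longrightarrow> nz (p @ q)"
proof (induction p)
  case Nil then show ?case by simp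
next
  case (Cons x r)
  show ?case
  proof (cases r)
    case Nil
    then show ?thesis using Cons.prems by simp
  next
    case (Cons y r')
    have "nz (r @ q)" using Cons.IH Cons.prems nz_tl \<open>r = y # r'\<close> by auto
    moreover have "x = False \<Longrightarrow> y = True" using Cons.prems \<open>r = y # r'\<close> by (cases y) auto
    ultimately show ?thesis using \<open>r = y # r'\<close> by (cases x) auto
  qed
qed

definition Jn :: "nat \<Rightarrow> bool list set" where
  "Jn n = {w. length w = n \<and> nz w}"

lemma Jn_fin: "finite (Jn n)"
proof -
  have "finite {xs. set xs \<subseteq> (UNIV::bool set) \<and> length xs = n}"
    by (rule finite_lists_length_eq) simp
  then show ?thesis unfolding Jn_def by (rule rev_finite_subset) auto
qed

lemma Jn_SS: "Jn (Suc (Suc n)) = (Cons True) ` Jn (Suc n) \<union> (\<lambda>r. False # True # r) ` Jn n"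
proof
  show "Jn (Suc (Suc n)) \<subseteq> (Cons True) ` Jn (Suc n) \<union> (\<lambda>r. False # True # r) ` Jn n"
  proof
    fix w assume "w \<in> Jn (Suc (Suc n))"
    then obtain x y r where w: "w = x # y # r" "length r = n" "nz w"
      unfolding Jn_def by (auto simp: length_Suc_conv)
    show "w \<in> (Cons True) ` Jn (Suc n) \<union> (\<lambda>r. False # True # r) ` Jn n"
      using w by (cases x; cases y) (auto simp: Jn_def)
  qed
  show "(Cons True) ` Jn (Suc n) \<union> (\<lambda>r. False # True # r) ` Jn n \<subseteq> Jn (Suc (Suc n))"
    by (auto simp: Jn_def)
qed

lemma card_Jn: "card (Jn n) = fib (n + 2)"
proof (induction n rule: fib.induct)
  case 1
  have "Jn 0 = {[]}" by (auto simp: Jn_def)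
  then show ?case by simp
next
  case 2
  have "Jn (Suc 0) = {[True], [False]}"
    by (auto simp: Jn_def length_Suc_conv)
  then show ?case by (simp add: numeral_3_eq_3)
next
  case (3 n)
  have d: "(Cons True) ` Jn (Suc n) \<inter> (\<lambda>r. False # True # r) ` Jn n = {}" by auto
  have "card (Jn (Suc (Suc n))) = card (Jn (Suc n)) + card (Jn n)"
    unfolding Jn_SS
    by (subst card_Un_disjoint) (auto simp: Jn_fin d card_image inj_on_def)
  then show ?case using 3 by simp
qed


fun fac :: "bool list \<Rightarrow> nat list" where
  "fac [] = []"
| "fac (True # xs) = 0 # fac xs"
| "fac (False # xs) = 1 # fac (tl xs)"

lemma fac_ok: "nz u \<Longrightarrow> (u = [] \<or> last u = True) \<Longrightarrow>
   concat (map (\<lambda>i. [[True],[False,True],w] ! i) (fac u)) = u \<and> set (fac u) \<subseteq> {0,1}"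
proof (induction u rule: fac.induct)
  case 1 then show ?case by simp
next
  case (2 xs)
  then show ?case by (cases xs) auto
next
  case (3 xs)
  then obtain xs' where xs: "xs = True # xs'"
    by (cases xs; cases "hd xs") auto
  then show ?case using 3 by (cases xs') auto
qed

lemma fac_ne: "u \<noteq> [] \<Longrightarrow> fac u \<noteq> []"
  by (cases u rule: fac.cases) auto

lemma nz_snoc: "nz w \<Longrightarrow> nz (w @ [True])"
proof (induction w)
  case (Cons x r)
  have IH: "nz (r @ [True])" using Cons nz_tl by blast
  show ?case
  proof (cases x)
    case True then show ?thesis using IH by simp
  next
    case False
    show ?thesis
    proof (cases r)
      case Nil then show ?thesis using False by simp
    next
      case (Cons y r')
      have "y = True" using Cons.prems \<open>r = y # r'\<close> False by (cases y) auto
      then show ?thesis using IH \<open>r = y # r'\<close> False by simp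
    qed
  qed
qed simp

lemma concat_nz: "set us \<subseteq> {0,1} \<Longrightarrow>
   nz (concat (map (\<lambda>i. [[True],[False,True],w] ! i) us)) \<and>
   (concat (map (\<lambda>i. [[True],[False,True],w] ! i) us) = [] \<or>
    last (concat (map (\<lambda>i. [[True],[False,True],w] ! i) us)) = True)"
proof (induction us)
  case Nil then show ?case by simp
next
  case (Cons u us)
  have hu: "u = 0 \<or> u = 1" using Cons.prems by auto
  let ?P = "concat (map (\<lambda>i. [[True],[False,True],w] ! i) us)"
  have IH: "nz ?P" "?P = [] \<or> last ?P = True" using Cons by auto
  have "nz ([[True],[False,True],w] ! u @ ?P)"
    using hu IH by (intro nz_app) auto
  moreover have "last ([[True],[False,True],w] ! u @ ?P) = True"
    using hu IH by (auto simp: last_append)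
  ultimately show ?case by simp
qed

lemma period:
  assumes "p @ w = w @ s" "p \<noteq> []" "nz p" "last p = True"
  shows "nz w"
proof -
  have pre: "\<exists>t. concat (replicate n p) @ w = w @ t" for n
  proof (induction n)
    case 0 then show ?case by simp
  next
    case (Suc n)
    then obtain t where "concat (replicate n p) @ w = w @ t" by blast
    then have "concat (replicate (Suc n) p) @ w = w @ s @ t" using assms(1) by simp
    then show ?case by blast
  qed
  have nzP: "nz (concat (replicate n p)) \<and> (concat (replicate n p) = [] \<or> last (concat (replicate n p)) = True)" for n
  proof (induction n)
    case 0 then show ?case by simp
  next
    case (Suc n)
    then show ?case using assms by (auto intro: nz_app simp: last_append)
  qed
  let ?P = "concat (replicate (length w) p)"
  obtain t where t: "?P @ w = w @ t" using pre by blast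
  have "length ?P \<ge> length w"
    using assms(2) by (simp add: length_concat sum_list_replicate) (cases p; simp)
  then have "\<exists>r. ?P = w @ r" using t
    by (metis append_eq_append_conv_if append_take_drop_id take_all)
  then show ?thesis using nzP[of "length w"] nz_prefix by metis
qed

lemma key:
  assumes "\<not> nz w" "set ks \<subseteq> {..<3}" "ks \<noteq> []" "hd ks \<noteq> 2"
  shows "w @ X \<noteq> concat (map (\<lambda>i. [[True],[False,True],w] ! i) ks)"
proof
  let ?f = "\<lambda>i. [[True],[False,True],w] ! i"
  assume e: "w @ X = concat (map ?f ks)"
  define us where "us = takeWhile (\<lambda>i. i \<noteq> 2) ks"
  define rest where "rest = dropWhile (\<lambda>i. i \<noteq> 2) ks"
  have ks: "ks = us @ rest" unfolding us_def rest_def by simp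
  have "us \<noteq> []" using assms(3,4) unfolding us_def by (cases ks) auto
  have "set us \<subseteq> {0,1}" using assms(2) set_takeWhileD unfolding us_def by fastforce
  define p where "p = concat (map ?f us)"
  have p: "nz p" "p = [] \<or> last p = True" using concat_nz[OF \<open>set us \<subseteq> {0,1}\<close>] p_def by auto
  have "p \<noteq> []" using \<open>us \<noteq> []\<close> \<open>set us \<subseteq> {0,1}\<close> unfolding p_def
    by (cases us) auto
  show False
  proof (cases rest)
    case Nil
    then have "w @ X = p" using e ks p_def by simp
    then show False using p nz_prefix assms(1) by metis
  next
    case (Cons r rs)
    then have "r = 2" unfolding rest_def by (simp add: dropWhile_eq_Cons_conv)
    then have "w @ X = (p @ w) @ concat (map ?f rs)" using e ks Cons p_def by simp
    then have "take (length w) (w @ X) = take (length w) ((p @ w) @ concat (map ?f rs))" by simp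
    then have "take (length w) (p @ w) = w" by simp
    then have "\<exists>s. p @ w = w @ s" by (metis append_take_drop_id)
    then show False using period p \<open>p \<noteq> []\<close> assms(1) by blast
  qed
qed

lemma code_if:
  assumes "\<not> nz w"
  shows "is_code [[True],[False,True],w]"
  unfolding is_code_def
proof (intro allI)
  let ?f = "\<lambda>i. [[True],[False,True],w] ! i"
  have wne: "w \<noteq> []" using assms by auto
  have ne: "i < 3 \<Longrightarrow> ?f i \<noteq> []" for i using wne by (cases i; cases "i - 1"; auto)
  have cne: "set ks \<subseteq> {..<3} \<Longrightarrow> concat (map ?f ks) = [] \<Longrightarrow> ks = []" for ks
    using ne by (cases ks) auto
  fix xs js :: "nat list"
  show "xs \<noteq> [] \<longrightarrow> js \<noteq> [] \<longrightarrow> set xs \<subseteq> {..<length [[True],[False,True],w]} \<longrightarrow>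
        set js \<subseteq> {..<length [[True],[False,True],w]} \<longrightarrow>
        concat (map ?f xs) = concat (map ?f js) \<longrightarrow> xs = js"
  proof (induction xs arbitrary: js)
    case Nil then show ?case by simp
  next
    case (Cons i is')
    show ?case
    proof (intro impI)
      assume h: "js \<noteq> []" "set (i # is') \<subseteq> {..<length [[True], [False, True], w]}"
        "set js \<subseteq> {..<length [[True], [False, True], w]}"
        "concat (map ?f (i # is')) = concat (map ?f js)"
      obtain j js' where js: "js = j # js'" using h(1) by (cases js) auto
      have i3: "i < 3" "j < 3" "set is' \<subseteq> {..<3}" "set js' \<subseteq> {..<3}" using h js by auto
      show "i # is' = js"
      proof (cases "i = j")
        case True
        then have eq: "concat (map ?f is') = concat (map ?f js')" using h(4) js by simp
        show ?thesis
        proof (cases "is' = []")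
          case True
          then show ?thesis using eq cne i3 js \<open>i = j\<close> by auto
        next
          case False
          show ?thesis
          proof (cases "js' = []")
            case True
            then show ?thesis using eq cne i3 \<open>is' \<noteq> []\<close> by auto
          next
            case False
            then have "is' = js'" using Cons.IH[of js'] eq \<open>is' \<noteq> []\<close> i3 by (simp add: numeral_3_eq_3)
            then show ?thesis using js \<open>i = j\<close> by simp
          qed
        qed
      next
        case False
        show ?thesis
        proof (cases "i = 2")
          case True
          then have "w @ concat (map ?f is') = concat (map ?f js)" using h(4) by simp
          moreover have "set js \<subseteq> {..<3}" using h(3) by (simp add: numeral_3_eq_3)
          ultimately show ?thesis using key[OF assms] js \<open>i \<noteq> j\<close> True by fastforce
        next
          case i2: False
          show ?thesis
          proof (cases "j = 2")
            case True
            then have "w @ concat (map ?f js') = concat (map ?f (i # is'))" using h(4) js by simp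
            moreover have "set (i # is') \<subseteq> {..<3}" using h(2) by (simp add: numeral_3_eq_3)
            ultimately show ?thesis using key[OF assms, of "i # is'"] i2 by fastforce
          next
            case j2: False
            then have "(i = 0 \<and> j = 1) \<or> (i = 1 \<and> j = 0)" using i2 i3 \<open>i \<noteq> j\<close> by auto
            then show ?thesis using h(4) js by auto
          qed
        qed
      qed
    qed
  qed
qed

lemma not_code_if:
  assumes "nz w" "w \<noteq> []"
  shows "\<not> is_code [[True],[False,True],w]"
proof
  let ?f = "\<lambda>i. [[True],[False,True],w] ! i"
  assume c: "is_code [[True],[False,True],w]"
  show False
  proof (cases "last w")
    case True
    have f: "concat (map ?f (fac w)) = w" "set (fac w) \<subseteq> {0,1}" using fac_ok assms True by blast+
    have "[2] = fac w"
      by (rule c[unfolded is_code_def, rule_format]) (use f fac_ne[OF assms(2)] in auto)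
    then have "(2::nat) \<in> set (fac w)" by (metis list.set_intros(1))
    then show False using f(2) by auto
  next
    case False
    let ?u = "w @ [True]"
    have f: "concat (map ?f (fac ?u)) = ?u" "set (fac ?u) \<subseteq> {0,1}"
      using fac_ok nz_snoc assms by auto
    have "[2, 0] = fac ?u"
      by (rule c[unfolded is_code_def, rule_format]) (use f fac_ne[of ?u] in auto)
    then have "(2::nat) \<in> set (fac ?u)" by (metis list.set_intros(1))
    then show False using f(2) by auto
  qed
qed

theorem proposition4:
  fixes c :: nat
  assumes "c \<ge> 1"
  shows "Ktilde c = J c \<and> card (Ktilde c) = fib (c + 2)"
proof -
  have JJ: "J c = Jn c" unfolding J_def Jn_def zero_def using nz_iff by auto
  have KJ: "Ktilde c = Jn c"
  proof
    show "Ktilde c \<subseteq> Jn c"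
      unfolding Ktilde_def Jn_def one_def zero_def using code_if by auto
    show "Jn c \<subseteq> Ktilde c"
      unfolding Ktilde_def Jn_def one_def zero_def using not_code_if assms by fastforce
  qed
  show ?thesis using JJ KJ card_Jn by simp
qed

end
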